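(* Let $G$ be an infinite finitely generated residually finite group, $S$ a finite symmetric generating set, and $(X_n)_{n\ge0}$ the lazy random walk on $\mathrm{Cay}(G,S)$. Then $$\liminf_{n\to\infty}\mathbb{E}[D_G(X_n)]\ge 2+\sum_{k\ge2}\frac{1}{[G:\Lambda_k]}.$$
   Context: For $g\ne e$, $D_G(g)=\min\{[G:N]: N\lhd G\text{ of finite index},\ g\notin N\}$, and $D_G(e)=0$. For $k\ge2$, $\Lambda_k$ is the intersection of all normal subgroups of $G$ of index at most $k$; $\Lambda_0=\Lambda_1=G$. The lazy random walk on $\mathrm{Cay}(G,S)$ is the Markov chain with $X_0=e$ and transition matrix $\frac12 I+\frac12P$, where $P(x,y)=\frac1{|S|}\#\{s\in S:y=xs\}$. *)

theory Defs
  imports "HOL-Algebra.Algebra" "HOL-Probability.Probability"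
begin

text \<open>Index of a subgroup: number of right cosets (0 if infinitely many).\<close>
definition grp_index :: "('a, 'b) monoid_scheme \<Rightarrow> 'a set \<Rightarrow> nat" where
  "grp_index G N = card (rcosets\<^bsub>G\<^esub> N)"

definition fin_normal :: "('a, 'b) monoid_scheme \<Rightarrow> 'a set \<Rightarrow> bool" where
  "fin_normal G N \<longleftrightarrow> N \<lhd> G \<and> finite (rcosets\<^bsub>G\<^esub> N)"

definition D_G :: "('a, 'b) monoid_scheme \<Rightarrow> 'a \<Rightarrow> nat" where
  "D_G G g = (if g = \<one>\<^bsub>G\<^esub> then 0
      else Inf {grp_index G N | N. fin_normal G N \<and> g \<notin> N})"

definition Lambda :: "('a, 'b) monoid_scheme \<Rightarrow> nat \<Rightarrow> 'a set" where
  "Lambda G k = carrier G \<inter> \<Inter> {N. fin_normal G N \<and> grp_index G N \<le> k}"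

definition residually_finite :: "('a, 'b) monoid_scheme \<Rightarrow> bool" where
  "residually_finite G \<longleftrightarrow>
     (\<forall>g \<in> carrier G. g \<noteq> \<one>\<^bsub>G\<^esub> \<longrightarrow> (\<exists>N. fin_normal G N \<and> g \<notin> N))"

definition finitely_generated :: "('a, 'b) monoid_scheme \<Rightarrow> bool" where
  "finitely_generated G \<longleftrightarrow>
     (\<exists>A. finite A \<and> A \<subseteq> carrier G \<and> generate G A = carrier G)"

definition lazy_step :: "('a, 'b) monoid_scheme \<Rightarrow> 'a set \<Rightarrow> 'a \<Rightarrow> 'a pmf" where
  "lazy_step G S x = bind_pmf (bernoulli_pmf (1/2))
     (\<lambda>b. if b then return_pmf x else map_pmf (\<lambda>s. x \<otimes>\<^bsub>G\<^esub> s) (pmf_of_set S))"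

primrec lazy_walk :: "('a, 'b) monoid_scheme \<Rightarrow> 'a set \<Rightarrow> nat \<Rightarrow> 'a pmf" where
  "lazy_walk G S 0 = return_pmf \<one>\<^bsub>G\<^esub>"
| "lazy_walk G S (Suc n) = bind_pmf (lazy_walk G S n) (lazy_step G S)"

end

theory Submission
  imports Defs "HOL-Library.Groups_Big_Fun"
begin


lemma reidx_sum:
  fixes f :: "'v \<Rightarrow> real"
  assumes inv1: "\<And>v. act' (act v) = v" and inv2: "\<And>v. act (act' v) = v"
    and W: "finite W" "{v. f v \<noteq> 0} \<subseteq> W" "{v. f (act v) \<noteq> 0} \<subseteq> W"
  shows "(\<Sum>v\<in>W. f (act v)) = (\<Sum>v\<in>W. f v)"
proof -
  have b: "bij act" by (metis bijI' inv1 inv2)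
  have "(\<Sum>v\<in>W. f (act v)) = Sum_any (\<lambda>v. f (act v))"
    using W by (simp add: Sum_any.expand_superset)
  also have "\<dots> = Sum_any f"
    by (rule Sum_any.reindex_cong[symmetric, OF b]) auto
  also have "\<dots> = (\<Sum>v\<in>W. f v)" using W by (simp add: Sum_any.expand_superset)
  finally show ?thesis .
qed

lemma sq_avg_le:
  fixes a :: "'s \<Rightarrow> real"
  assumes "finite S" "S \<noteq> {}"
  shows "((\<Sum>s\<in>S. a s) / card S)\<^sup>2 \<le> (\<Sum>s\<in>S. (a s)\<^sup>2) / card S"
proof -
  have c: "real (card S) > 0" using assms by (simp add: card_gt_0_iff)
  have "(\<Sum>s\<in>S. a s)\<^sup>2 \<le> (\<Sum>s\<in>S. (a s)\<^sup>2) * card S"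
    by (rule sum_squared_le_sum_of_squares)
  then show ?thesis using c by (simp add: power_divide field_simps power2_eq_square)
qed

lemma energy_step:
  fixes act :: "'v \<Rightarrow> 's \<Rightarrow> 'v" and a b :: "'v \<Rightarrow> real"
  assumes S: "finite S" "S \<noteq> {}"
    and inv1: "\<And>s v. s \<in> S \<Longrightarrow> act (act v s) (\<iota> s) = v"
    and inv2: "\<And>s v. s \<in> S \<Longrightarrow> act (act v (\<iota> s)) s = v"
    and fin: "finite {v. a v \<noteq> 0}"
    and bdef: "\<And>v. b v = a v / 2 + (\<Sum>s\<in>S. a (act v s)) / (2 * card S)"
  shows "Sum_any (\<lambda>v. (b v)\<^sup>2) \<le> Sum_any (\<lambda>v. (a v)\<^sup>2)
          - (\<Sum>s\<in>S. Sum_any (\<lambda>v. (a v - a (act v s))\<^sup>2)) / (4 * card S)"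
proof -
  define k where "k = real (card S)"
  have k: "k > 0" using S by (simp add: k_def card_gt_0_iff)
  define W where "W = {v. a v \<noteq> 0} \<union> (\<Union>s\<in>S. (\<lambda>v. act v (\<iota> s)) ` {v. a v \<noteq> 0})"
  have W: "finite W" using fin S by (simp add: W_def)
  have sa: "{v. a v \<noteq> 0} \<subseteq> W" by (auto simp: W_def)
  have sas: "{v. a (act v s) \<noteq> 0} \<subseteq> W" if "s \<in> S" for s
  proof
    fix v assume "v \<in> {v. a (act v s) \<noteq> 0}"
    then have "act (act v s) (\<iota> s) \<in> (\<lambda>v. act v (\<iota> s)) ` {v. a v \<noteq> 0}" by auto
    then show "v \<in> W" using inv1[OF that] that by (auto simp: W_def)
  qed
  define Pa where "Pa v = (\<Sum>s\<in>S. a (act v s)) / k" for v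
  have bP: "b v = a v / 2 + Pa v / 2" for v by (simp add: bdef Pa_def k_def)
  have sb: "{v. b v \<noteq> 0} \<subseteq> W"
  proof
    fix v assume "v \<in> {v. b v \<noteq> 0}"
    then have "a v \<noteq> 0 \<or> (\<exists>s\<in>S. a (act v s) \<noteq> 0)" by (auto simp: bdef) (meson sum.neutral)
    then show "v \<in> W" using sa sas by blast
  qed
  have r2: "(\<Sum>v\<in>W. (a (act v s))\<^sup>2) = (\<Sum>v\<in>W. (a v)\<^sup>2)" if "s \<in> S" for s
    by (rule reidx_sum[where act'="\<lambda>v. act v (\<iota> s)"]) (use inv1 inv2 that W sa sas[OF that] in auto)
  have eA: "Sum_any (\<lambda>v. (a v)\<^sup>2) = (\<Sum>v\<in>W. (a v)\<^sup>2)"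
    by (rule Sum_any.expand_superset) (use W sa in auto)
  have eB: "Sum_any (\<lambda>v. (b v)\<^sup>2) = (\<Sum>v\<in>W. (b v)\<^sup>2)"
    by (rule Sum_any.expand_superset) (use W sb in auto)
  have eD: "Sum_any (\<lambda>v. (a v - a (act v s))\<^sup>2) = (\<Sum>v\<in>W. (a v - a (act v s))\<^sup>2)" if "s \<in> S" for s
  proof (rule Sum_any.expand_superset[OF W])
    show "{v. (a v - a (act v s))\<^sup>2 \<noteq> 0} \<subseteq> W"
    proof
      fix x assume "x \<in> {v. (a v - a (act v s))\<^sup>2 \<noteq> 0}"
      then have "a x \<noteq> 0 \<or> a (act x s) \<noteq> 0" by auto
      then show "x \<in> W" using sa sas[OF that] by blast
    qed
  qed
  have P1: "(\<Sum>v\<in>W. (Pa v)\<^sup>2) \<le> (\<Sum>v\<in>W. (a v)\<^sup>2)"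
  proof -
    have "(\<Sum>v\<in>W. (Pa v)\<^sup>2) \<le> (\<Sum>v\<in>W. (\<Sum>s\<in>S. (a (act v s))\<^sup>2) / k)"
      unfolding Pa_def k_def by (rule sum_mono) (rule sq_avg_le[OF S])
    also have "\<dots> = (\<Sum>s\<in>S. (\<Sum>v\<in>W. (a (act v s))\<^sup>2)) / k"
      by (simp add: sum_divide_distrib[symmetric] sum.swap[of _ W])
    also have "\<dots> = (\<Sum>s\<in>S. (\<Sum>v\<in>W. (a v)\<^sup>2)) / k"
      using r2 by simp
    also have "\<dots> = (\<Sum>v\<in>W. (a v)\<^sup>2)" using k by (simp add: k_def)
    finally show ?thesis .
  qed
  have P2: "(\<Sum>s\<in>S. (\<Sum>v\<in>W. (a v - a (act v s))\<^sup>2))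
      = 2 * k * (\<Sum>v\<in>W. (a v)\<^sup>2) - 2 * k * (\<Sum>v\<in>W. a v * Pa v)"
  proof -
    have "(\<Sum>s\<in>S. (\<Sum>v\<in>W. (a v - a (act v s))\<^sup>2))
        = (\<Sum>s\<in>S. (\<Sum>v\<in>W. (a v)\<^sup>2) - 2 * (\<Sum>v\<in>W. a v * a (act v s)) + (\<Sum>v\<in>W. (a (act v s))\<^sup>2))"
      by (rule sum.cong) (auto simp: power2_diff sum.distrib sum_subtractf sum_distrib_left mult.assoc)
    also have "\<dots> = (\<Sum>s\<in>S. 2 * (\<Sum>v\<in>W. (a v)\<^sup>2) - 2 * (\<Sum>v\<in>W. a v * a (act v s)))"
      by (rule sum.cong) (use r2 in auto)
    also have "\<dots> = 2 * k * (\<Sum>v\<in>W. (a v)\<^sup>2) - 2 * (\<Sum>v\<in>W. a v * (\<Sum>s\<in>S. a (act v s)))"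
      by (simp add: sum_subtractf k_def sum_distrib_left sum.swap[of _ S W] mult.assoc mult.left_commute)
    also have "(\<Sum>v\<in>W. a v * (\<Sum>s\<in>S. a (act v s))) = k * (\<Sum>v\<in>W. a v * Pa v)"
    proof -
      have kP: "k * Pa v = (\<Sum>s\<in>S. a (act v s))" for v using k by (simp add: Pa_def)
      have "k * (\<Sum>v\<in>W. a v * Pa v) = (\<Sum>v\<in>W. a v * (k * Pa v))"
        by (simp add: sum_distrib_left mult.left_commute)
      then show ?thesis using kP by simp
    qed
    finally show ?thesis by simp
  qed
  have "(\<Sum>v\<in>W. (b v)\<^sup>2) = (\<Sum>v\<in>W. (a v)\<^sup>2) / 4 + (\<Sum>v\<in>W. a v * Pa v) / 2 + (\<Sum>v\<in>W. (Pa v)\<^sup>2) / 4"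
  proof -
    have "(b v)\<^sup>2 = (a v)\<^sup>2 / 4 + a v * Pa v / 2 + (Pa v)\<^sup>2 / 4" for v
      by (simp add: bP power2_eq_square field_simps)
    then show ?thesis by (simp add: sum.distrib sum_divide_distrib[symmetric])
  qed
  also have "\<dots> \<le> (\<Sum>v\<in>W. (a v)\<^sup>2) - (\<Sum>s\<in>S. (\<Sum>v\<in>W. (a v - a (act v s))\<^sup>2)) / (4 * k)"
  proof -
    have "(\<Sum>s\<in>S. (\<Sum>v\<in>W. (a v - a (act v s))\<^sup>2)) / (4 * k)
         = ((\<Sum>v\<in>W. (a v)\<^sup>2) - (\<Sum>v\<in>W. a v * Pa v)) / 2"
      unfolding P2 using k by (simp add: field_simps)
    moreover have "\<And>A B C D::real. D = (A - B) / 2 \<Longrightarrow> C \<le> A \<Longrightarrow> A/4 + B/2 + C/4 \<le> A - D"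
      by simp
    ultimately show ?thesis using P1 by blast
  qed
  finally show ?thesis
    using eA eB eD by (simp add: k_def)
qed

lemma Sum_any_nonneg:
  fixes g :: "'v \<Rightarrow> real"
  assumes "\<And>v. g v \<ge> 0" shows "Sum_any g \<ge> 0"
  unfolding Sum_any.expand_set by (rule sum_nonneg) (use assms in auto)

lemma walk_diff_tendsto:
  fixes act :: "'v \<Rightarrow> 's \<Rightarrow> 'v" and q :: "nat \<Rightarrow> 'v \<Rightarrow> real"
  assumes S: "finite S" "S \<noteq> {}"
    and inv1: "\<And>s v. s \<in> S \<Longrightarrow> act (act v s) (\<iota> s) = v"
    and inv2: "\<And>s v. s \<in> S \<Longrightarrow> act (act v (\<iota> s)) s = v"
    and fin: "\<And>n. finite {v. q n v \<noteq> 0}"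
    and rec: "\<And>n v. q (Suc n) v = q n v / 2 + (\<Sum>s\<in>S. q n (act v s)) / (2 * card S)"
    and s: "s \<in> S"
  shows "(\<lambda>n. q n v - q n (act v s)) \<longlonglongrightarrow> 0"
proof -
  define k where "k = real (card S)"
  have k: "k > 0" using S by (simp add: k_def card_gt_0_iff)
  define E where "E n = Sum_any (\<lambda>v. (q n v)\<^sup>2)" for n
  define D where "D n = (\<Sum>s\<in>S. Sum_any (\<lambda>v. (q n v - q n (act v s))\<^sup>2))" for n
  have E0: "E n \<ge> 0" for n unfolding E_def by (rule Sum_any_nonneg) auto
  have D0: "D n \<ge> 0" for n unfolding D_def by (rule sum_nonneg, rule Sum_any_nonneg) auto
  have step: "E (Suc n) \<le> E n - D n / (4 * k)" for n
    unfolding E_def D_def k_def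
    using energy_step[where S=S and act=act and \<iota>=\<iota> and a="q n" and b="q (Suc n)", OF S inv1 inv2 fin]
    by (simp add: rec)
  have Dle: "D n \<le> 4 * k * (E n - E (Suc n))" for n
    using step[of n] k by (simp add: field_simps)
  have tel: "(\<Sum>i<m. D i) \<le> 4 * k * (E 0 - E m)" for m
  proof (induction m)
    case 0 then show ?case by simp
  next
    case (Suc m) then show ?case using Dle[of m] by (simp add: algebra_simps)
  qed
  have "summable D"
  proof (rule bounded_imp_summable[OF D0])
    fix n
    have "(\<Sum>i\<le>n. D i) = (\<Sum>i<Suc n. D i)" by (simp add: lessThan_Suc_atMost)
    also have "\<dots> \<le> 4 * k * (E 0 - E (Suc n))" by (rule tel)
    also have "\<dots> \<le> 4 * k * E 0" using k E0[of "Suc n"] by simp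
    finally show "(\<Sum>i\<le>n. D i) \<le> 4 * k * E 0" .
  qed
  then have Dlim: "D \<longlonglongrightarrow> 0" by (rule summable_LIMSEQ_zero)
  have term_le: "(q n v - q n (act v s))\<^sup>2 \<le> D n" for n
  proof -
    let ?g = "\<lambda>v. (q n v - q n (act v s))\<^sup>2"
    have sub: "{v. ?g v \<noteq> 0} \<subseteq> {v. q n v \<noteq> 0} \<union> (\<lambda>v. act v (\<iota> s)) ` {v. q n v \<noteq> 0}"
    proof
      fix x assume "x \<in> {v. ?g v \<noteq> 0}"
      then have "q n x \<noteq> 0 \<or> q n (act x s) \<noteq> 0" by auto
      moreover have "x = act (act x s) (\<iota> s)" using inv1[OF s] by simp
      ultimately show "x \<in> {v. q n v \<noteq> 0} \<union> (\<lambda>v. act v (\<iota> s)) ` {v. q n v \<noteq> 0}" by blast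
    qed
    have finG: "finite {v. ?g v \<noteq> 0}" by (rule finite_subset[OF sub]) (use fin in auto)
    have "?g v \<le> Sum_any ?g"
    proof (cases "?g v = 0")
      case True then show ?thesis using Sum_any_nonneg[of ?g] by simp
    next
      case False
      then show ?thesis unfolding Sum_any.expand_set
        by (intro member_le_sum) (use finG in auto)
    qed
    also have "\<dots> \<le> D n" unfolding D_def
      by (rule member_le_sum) (use s S in \<open>auto intro: Sum_any_nonneg\<close>)
    finally show ?thesis .
  qed
  have sq: "(\<lambda>n. (q n v - q n (act v s))\<^sup>2) \<longlonglongrightarrow> 0"
    by (rule tendsto_sandwich[OF _ _ tendsto_const Dlim]) (auto intro: term_le always_eventually)
  have "(\<lambda>n. sqrt ((q n v - q n (act v s))\<^sup>2)) \<longlonglongrightarrow> sqrt 0"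
    by (rule tendsto_real_sqrt[OF sq])
  then have "(\<lambda>n. \<bar>q n v - q n (act v s)\<bar>) \<longlonglongrightarrow> 0" by simp
  then show ?thesis by (rule tendsto_rabs_zero_cancel)
qed



locale lwalk = group G for G (structure) + fixes S
  assumes S_fin: "finite S" and S_sub: "S \<subseteq> carrier G"
    and S_inv: "\<And>s. s \<in> S \<Longrightarrow> inv s \<in> S" and S_ne: "S \<noteq> {}"
begin

abbreviation "lw n \<equiv> lazy_walk G S n"

lemma set_lazy_step: "x \<in> carrier G \<Longrightarrow> set_pmf (lazy_step G S x) \<subseteq> carrier G"
  unfolding lazy_step_def using S_sub S_fin S_ne
  by (auto simp: set_pmf_of_set[OF S_ne S_fin] split: if_splits intro!: m_closed)

lemma finite_set_lazy_step: "finite (set_pmf (lazy_step G S x))"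
  unfolding lazy_step_def using S_fin S_ne
  by (auto simp: set_pmf_of_set split: if_splits)

lemma set_lw: "set_pmf (lw n) \<subseteq> carrier G"
proof (induction n)
  case 0 then show ?case by simp
next
  case (Suc n) then show ?case using set_lazy_step by auto
qed

lemma finite_set_lw: "finite (set_pmf (lw n))"
proof (induction n)
  case 0 then show ?case by simp
next
  case (Suc n) then show ?case using finite_set_lazy_step by auto
qed

lemma exp_lazy_step:
  fixes h :: "'a \<Rightarrow> real"
  shows "measure_pmf.expectation (lazy_step G S x) h
     = h x / 2 + (\<Sum>s\<in>S. h (x \<otimes> s)) / (2 * card S)"
proof -
  have "measure_pmf.expectation (lazy_step G S x) h
     = (\<Sum>b\<in>UNIV. pmf (bernoulli_pmf (1/2)) b *\<^sub>R measure_pmf.expectation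
          (if b then return_pmf x else map_pmf (\<lambda>s. x \<otimes> s) (pmf_of_set S)) h)"
    unfolding lazy_step_def
    by (rule pmf_expectation_bind) (use S_fin S_ne in \<open>auto simp: set_pmf_of_set\<close>)
  also have "\<dots> = h x / 2 + (\<Sum>s\<in>S. h (x \<otimes> s)) / card S / 2"
    using S_fin S_ne by (simp add: UNIV_bool integral_pmf_of_set)
  finally show ?thesis by simp
qed

lemma exp_rec:
  fixes h :: "'a \<Rightarrow> real"
  shows "measure_pmf.expectation (lw (Suc n)) h
     = measure_pmf.expectation (lw n) h / 2
       + (\<Sum>s\<in>S. measure_pmf.expectation (lw n) (\<lambda>x. h (x \<otimes> s))) / (2 * card S)"
proof -
  let ?A = "set_pmf (lw n)"
  have e: "measure_pmf.expectation (lw n) f = (\<Sum>a\<in>?A. pmf (lw n) a * f a)" for f :: "'a \<Rightarrow> real"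
    by (subst integral_measure_pmf[of ?A]) (auto simp: finite_set_lw)
  have "measure_pmf.expectation (lw (Suc n)) h
     = (\<Sum>a\<in>?A. pmf (lw n) a *\<^sub>R measure_pmf.expectation (lazy_step G S a) h)"
    unfolding lazy_walk.simps
    by (rule pmf_expectation_bind) (auto simp: finite_set_lw finite_set_lazy_step)
  also have "\<dots> = (\<Sum>a\<in>?A. pmf (lw n) a * h a) / 2
       + (\<Sum>s\<in>S. (\<Sum>a\<in>?A. pmf (lw n) a * h (a \<otimes> s))) / (2 * card S)"
    by (simp add: exp_lazy_step sum.distrib sum_divide_distrib[symmetric] sum_distrib_left
        sum.swap[of _ S ?A] field_simps)
  finally show ?thesis by (simp add: e)
qed

lemma exp_cong_set:
  fixes f g :: "'a \<Rightarrow> real"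
  assumes "\<And>x. x \<in> set_pmf M \<Longrightarrow> f x = g x"
  shows "measure_pmf.expectation M f = measure_pmf.expectation M g"
  by (rule integral_cong_AE) (auto intro!: AE_pmfI assms)

lemma sum_S_inv: "(\<Sum>s\<in>S. f (inv s)) = (\<Sum>s\<in>S. f s)"
  by (rule sum.reindex_bij_witness[where i="\<lambda>s. inv s" and j="\<lambda>s. inv s"]) (use S_inv S_sub in auto)

lemma meas_rec:
  assumes A: "A \<subseteq> carrier G"
  shows "measure (lw (Suc n)) A = measure (lw n) A / 2
       + (\<Sum>s\<in>S. measure (lw n) (A #> s)) / (2 * card S)"
proof -
  have m: "measure (lw m) B = measure_pmf.expectation (lw m) (indicator B)" for m B by simp
  have key: "measure_pmf.expectation (lw n) (\<lambda>x. indicator A (x \<otimes> s))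
      = measure (lw n) (A #> inv s)" if s: "s \<in> S" for s
  proof -
    have sc: "s \<in> carrier G" using s S_sub by auto
    have "measure_pmf.expectation (lw n) (\<lambda>x. indicator A (x \<otimes> s) :: real)
        = measure_pmf.expectation (lw n) (indicator (A #> inv s))"
    proof (rule exp_cong_set)
      fix x assume "x \<in> set_pmf (lw n)"
      then have x: "x \<in> carrier G" using set_lw by auto
      have "x \<otimes> s \<in> A \<longleftrightarrow> x \<in> A #> inv s"
      proof
        assume "x \<otimes> s \<in> A"
        moreover have "x = (x \<otimes> s) \<otimes> inv s" using x sc by (simp add: m_assoc)
        ultimately show "x \<in> A #> inv s" unfolding r_coset_def by blast
      next
        assume "x \<in> A #> inv s"
        then obtain a where a: "a \<in> A" "x = a \<otimes> inv s" unfolding r_coset_def by blast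
        then have "x \<otimes> s = a" using A sc by (auto simp: m_assoc)
        then show "x \<otimes> s \<in> A" using a by simp
      qed
      then show "indicator A (x \<otimes> s) = indicator (A #> inv s) x"
        by (simp add: indicator_def)
    qed
    then show ?thesis by simp
  qed
  have "measure (lw (Suc n)) A = measure (lw n) A / 2
       + (\<Sum>s\<in>S. measure (lw n) (A #> inv s)) / (2 * card S)"
    unfolding m[of "Suc n"] exp_rec by (simp add: key)
  also have "(\<Sum>s\<in>S. measure (lw n) (A #> inv s)) = (\<Sum>s\<in>S. measure (lw n) (A #> s))"
    by (rule sum_S_inv)
  finally show ?thesis .
qed

lemma gen_ext:
  fixes q :: "nat \<Rightarrow> 'v \<Rightarrow> real" and R :: "'v \<Rightarrow> 'a \<Rightarrow> 'v"
  assumes base: "\<And>v s. v \<in> Dom \<Longrightarrow> s \<in> S \<Longrightarrow> (\<lambda>n. q n v - q n (R v s)) \<longlonglongrightarrow> 0"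
    and R1: "\<And>v. v \<in> Dom \<Longrightarrow> R v \<one> = v"
    and Rc: "\<And>v g. v \<in> Dom \<Longrightarrow> g \<in> carrier G \<Longrightarrow> R v g \<in> Dom"
    and Ra: "\<And>v g h. v \<in> Dom \<Longrightarrow> g \<in> carrier G \<Longrightarrow> h \<in> carrier G \<Longrightarrow> R (R v g) h = R v (g \<otimes> h)"
    and g: "g \<in> generate G S"
  shows "\<forall>v\<in>Dom. (\<lambda>n. q n v - q n (R v g)) \<longlonglongrightarrow> 0"
  using g
proof (induction g rule: generate.induct)
  case one then show ?case using R1 by simp
next
  case (incl h) then show ?case using base by blast
next
  case (inv h)
  show ?case
  proof
    fix v assume v: "v \<in> Dom"
    have hc: "h \<in> carrier G" using inv S_sub by auto
    define w where "w = R v (inv h)"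
    have w: "w \<in> Dom" using Rc v hc by (simp add: w_def)
    have "R w h = v" using Ra[OF v] R1[OF v] hc by (simp add: w_def)
    then have "(\<lambda>n. - (q n w - q n (R w h))) \<longlonglongrightarrow> - 0"
      using base[OF w inv] by (intro tendsto_minus) auto
    then show "(\<lambda>n. q n v - q n (R v (inv h))) \<longlonglongrightarrow> 0"
      using \<open>R w h = v\<close> by (simp add: w_def)
  qed
next
  case (eng g1 g2)
  have c: "g1 \<in> carrier G" "g2 \<in> carrier G"
    using eng(1,2) generate_in_carrier[OF S_sub] by auto
  show ?case
  proof
    fix v assume v: "v \<in> Dom"
    have "(\<lambda>n. (q n v - q n (R v g1)) + (q n (R v g1) - q n (R (R v g1) g2))) \<longlonglongrightarrow> 0 + 0"
      using eng.IH v Rc[OF v c(1)] by (intro tendsto_add) auto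
    then show "(\<lambda>n. q n v - q n (R v (g1 \<otimes> g2))) \<longlonglongrightarrow> 0"
      using Ra[OF v c] by simp
  qed
qed

lemma pmf_out: "v \<notin> carrier G \<Longrightarrow> pmf (lw n) v = 0"
  using set_lw by (auto simp: pmf_eq_0_set_pmf)

lemma pmf_diff:
  assumes gen: "generate G S = carrier G" and v: "v \<in> carrier G" and g: "g \<in> carrier G"
  shows "(\<lambda>n. pmf (lw n) v - pmf (lw n) (v \<otimes> g)) \<longlonglongrightarrow> 0"
proof -
  define act where "act v s = (if v \<in> carrier G then v \<otimes> s else v)" for v s
  have base: "(\<lambda>n. pmf (lw n) v - pmf (lw n) (v \<otimes> s)) \<longlonglongrightarrow> 0"
    if v: "v \<in> carrier G" and s: "s \<in> S" for v s
  proof -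
    have "(\<lambda>n. pmf (lw n) v - pmf (lw n) (act v s)) \<longlonglongrightarrow> 0"
    proof (rule walk_diff_tendsto[where \<iota>="\<lambda>s. inv s", OF S_fin S_ne _ _ _ _ s])
      fix s v assume s: "s \<in> S"
      then have sc: "s \<in> carrier G" using S_sub by auto
      show "act (act v s) (inv s) = v" using sc by (auto simp: act_def m_assoc)
      show "act (act v (inv s)) s = v" using sc by (auto simp: act_def m_assoc)
    next
      fix n show "finite {v. pmf (lw n) v \<noteq> 0}"
        using finite_set_lw by (simp add: set_pmf_eq[symmetric])
    next
      fix n v
      show "pmf (lw (Suc n)) v = pmf (lw n) v / 2 + (\<Sum>s\<in>S. pmf (lw n) (act v s)) / (2 * card S)"
      proof (cases "v \<in> carrier G")
        case True
        have "{v} #> s = {v \<otimes> s}" for s by (simp add: r_coset_def)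
        then show ?thesis using meas_rec[of "{v}" n] True
          by (simp add: measure_pmf_single act_def)
      next
        case False then show ?thesis using pmf_out[OF False, of n] pmf_out[OF False, of "Suc n"]
          by (simp add: act_def del: lazy_walk.simps)
      qed
    qed
    then show ?thesis using v by (simp add: act_def)
  qed
  have "\<forall>v\<in>carrier G. (\<lambda>n. pmf (lw n) v - pmf (lw n) (v \<otimes> g)) \<longlonglongrightarrow> 0"
    by (rule gen_ext[where R="\<lambda>v g. v \<otimes> g"]) (use base g gen in \<open>auto simp: m_assoc\<close>)
  then show ?thesis using v by blast
qed

lemma coset_lim:
  assumes gen: "generate G S = carrier G" and H: "subgroup H G" and fin: "finite (rcosets H)"
  shows "(\<lambda>n. measure (lw n) H) \<longlonglongrightarrow> 1 / real (card (rcosets H))"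
proof -
  define q where "q n C = (if C \<in> rcosets H then measure (lw n) C else 0)" for n C
  define act where "act C s = (if C \<in> rcosets H then C #> s else C)" for C s
  have Hc: "H \<subseteq> carrier G" using H subgroup.subset by blast
  have rc_sub: "C \<subseteq> carrier G" if "C \<in> rcosets H" for C
    using that Hc r_coset_subset_G[OF Hc] by (auto simp: RCOSETS_def)
  have rc_mult: "C #> g \<in> rcosets H" if C: "C \<in> rcosets H" and g: "g \<in> carrier G" for C g
  proof -
    obtain a where a: "a \<in> carrier G" "C = H #> a" using C by (auto simp: RCOSETS_def)
    then have "C #> g = H #> (a \<otimes> g)" using Hc g by (simp add: coset_mult_assoc)
    then show ?thesis using a g Hc by (auto intro: rcosetsI)
  qed
  have base: "(\<lambda>n. q n C - q n (C #> s)) \<longlonglongrightarrow> 0"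
    if C: "C \<in> rcosets H" and s: "s \<in> S" for C s
  proof -
    have "(\<lambda>n. q n C - q n (act C s)) \<longlonglongrightarrow> 0"
    proof (rule walk_diff_tendsto[where \<iota>="\<lambda>s. inv s", OF S_fin S_ne _ _ _ _ s])
      fix s C assume s: "s \<in> S"
      then have sc: "s \<in> carrier G" using S_sub by auto
      show "act (act C s) (inv s) = C"
        using sc rc_mult[of C s] rc_sub[of C] by (auto simp: act_def coset_mult_assoc)
      show "act (act C (inv s)) s = C"
        using sc rc_mult[of C "inv s"] rc_sub[of C] by (auto simp: act_def coset_mult_assoc)
    next
      fix n show "finite {C. q n C \<noteq> 0}"
        by (rule finite_subset[OF _ fin]) (auto simp: q_def split: if_splits)
    next
      fix n C
      show "q (Suc n) C = q n C / 2 + (\<Sum>s\<in>S. q n (act C s)) / (2 * card S)"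
      proof (cases "C \<in> rcosets H")
        case True
        have "q n (act C s) = measure (lw n) (C #> s)" if "s \<in> S" for s
          using True rc_mult[of C s] that S_sub by (auto simp: q_def act_def)
        then show ?thesis using meas_rec[OF rc_sub[OF True], of n] True
          by (simp add: q_def)
      next
        case False then show ?thesis by (simp add: q_def act_def)
      qed
    qed
    then show ?thesis using C by (simp add: act_def)
  qed
  have all: "\<forall>C\<in>rcosets H. (\<lambda>n. q n C - q n (C #> g)) \<longlonglongrightarrow> 0" if g: "g \<in> carrier G" for g
    by (rule gen_ext[where R="\<lambda>C g. C #> g"])
       (use base g gen rc_mult rc_sub in \<open>auto simp: coset_mult_assoc\<close>)
  have Hr: "H \<in> rcosets H" using Hc rcosetsI[OF Hc one_closed] by simp
  have diffC: "(\<lambda>n. measure (lw n) H - measure (lw n) C) \<longlonglongrightarrow> 0" if C: "C \<in> rcosets H" for C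
  proof -
    obtain a where a: "a \<in> carrier G" "C = H #> a" using C by (auto simp: RCOSETS_def)
    have "(\<lambda>n. q n H - q n (H #> a)) \<longlonglongrightarrow> 0" using all[OF a(1)] Hr by blast
    then show ?thesis using Hr C a by (simp add: q_def)
  qed
  define m where "m = card (rcosets H)"
  have m0: "m > 0" unfolding m_def using fin Hr by (auto simp: card_gt_0_iff)
  have tot: "(\<Sum>C\<in>rcosets H. measure (lw n) C) = 1" for n
  proof -
    have "(\<Sum>C\<in>rcosets H. measure (lw n) C) = measure (lw n) (\<Union>C\<in>rcosets H. C)"
      by (rule measure_pmf.finite_measure_finite_Union[symmetric])
         (use fin rcos_disjoint[OF H] in \<open>auto simp: disjoint_family_on_def pairwise_def disjnt_def\<close>)
    also have "(\<Union>C\<in>rcosets H. C) = carrier G" using rcosets_part_G[OF H] by simp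
    also have "measure (lw n) (carrier G) = measure (lw n) (carrier G \<inter> set_pmf (lw n))"
      by (simp add: measure_Int_set_pmf)
    also have "carrier G \<inter> set_pmf (lw n) = UNIV \<inter> set_pmf (lw n)" using set_lw by auto
    also have "measure (lw n) \<dots> = 1" using measure_Int_set_pmf[of "lw n" UNIV] by simp
    finally show ?thesis .
  qed
  have "(\<lambda>n. \<Sum>C\<in>rcosets H. (measure (lw n) H - measure (lw n) C)) \<longlonglongrightarrow> (\<Sum>C\<in>rcosets H. 0)"
    by (rule tendsto_sum) (use diffC in auto)
  then have "(\<lambda>n. real m * measure (lw n) H - 1) \<longlonglongrightarrow> 0"
    by (simp add: sum_subtractf tot m_def)
  then have "(\<lambda>n. (real m * measure (lw n) H - 1 + 1) / real m) \<longlonglongrightarrow> (0 + 1) / real m"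
    by (intro tendsto_intros) (use m0 in auto)
  then show ?thesis using m0 by (simp add: m_def)
qed

end


context lwalk begin

lemma Lambda_subgroup: "subgroup (Lambda G k) G"
proof -
  define F where "F = {N. fin_normal G N \<and> grp_index G N \<le> k}"
  show ?thesis
  proof (cases "F = {}")
    case True
    then have "Lambda G k = carrier G" unfolding Lambda_def F_def[symmetric] by simp
    then show ?thesis by (simp add: subgroup_self)
  next
    case False
    have sg: "\<And>N. N \<in> F \<Longrightarrow> subgroup N G"
      by (auto simp: F_def fin_normal_def normal_imp_subgroup)
    have "Lambda G k = \<Inter>F"
      using sg False unfolding Lambda_def F_def[symmetric] by (auto dest: subgroup.mem_carrier)
    then show ?thesis using subgroups_Inter[OF sg False] by simp
  qed
qed

lemma one_Lambda: "\<one> \<in> Lambda G k"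
  using Lambda_subgroup subgroup.one_closed by blast

lemma Lambda_small:
  assumes "k \<le> 1" shows "Lambda G k = carrier G"
proof -
  have "carrier G \<subseteq> N" if N: "fin_normal G N" "grp_index G N \<le> k" for N
  proof
    fix g assume g: "g \<in> carrier G"
    have sg: "subgroup N G" using N by (auto simp: fin_normal_def normal_imp_subgroup)
    have Nc: "N \<subseteq> carrier G" using sg subgroup.subset by blast
    have fin: "finite (rcosets N)" using N by (simp add: fin_normal_def)
    have le: "card (rcosets N) \<le> Suc 0" using N assms by (simp add: grp_index_def)
    have "N #> g \<in> rcosets N" using Nc g by (rule rcosetsI)
    moreover have "N #> \<one> \<in> rcosets N" using Nc by (rule rcosetsI) simp
    ultimately have "N #> g = N #> \<one>" using fin le by (auto simp: card_le_Suc0_iff_eq)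
    then have "N #> g = N" using Nc by simp
    then show "g \<in> N" using rcos_self[OF g sg] by simp
  qed
  then show ?thesis unfolding Lambda_def by auto
qed

lemma idx_carrier: "grp_index G (carrier G) = 1"
proof -
  have "rcosets (carrier G) = {carrier G}"
  proof -
    have "carrier G #> a = carrier G" if "a \<in> carrier G" for a
      using subgroup.rcos_const[OF subgroup_self is_group that] .
    then show ?thesis unfolding RCOSETS_def by auto
  qed
  then show ?thesis by (simp add: grp_index_def)
qed

lemma D_ge:
  assumes rf: "residually_finite G" and x: "x \<in> carrier G" "x \<noteq> \<one>" and xl: "x \<in> Lambda G k"
  shows "k < D_G G x"
proof -
  define A where "A = {grp_index G N | N. fin_normal G N \<and> x \<notin> N}"
  have ne: "A \<noteq> {}" using rf x by (auto simp: residually_finite_def A_def)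
  have "\<forall>a\<in>A. k < a"
  proof
    fix a assume "a \<in> A"
    then obtain N where N: "a = grp_index G N" "fin_normal G N" "x \<notin> N" by (auto simp: A_def)
    show "k < a"
    proof (rule ccontr)
      assume "\<not> k < a"
      then have "x \<in> N" using xl N by (auto simp: Lambda_def)
      then show False using N by simp
    qed
  qed
  moreover have "Inf A \<in> A" using ne by (rule Inf_nat_def1)
  ultimately have "k < Inf A" by blast
  then show ?thesis using x by (simp add: D_G_def A_def)
qed

lemma D_lower:
  assumes rf: "residually_finite G" and x: "x \<in> carrier G"
  shows "(\<Sum>k<K. indicator (Lambda G k) x - indicator {\<one>} x) \<le> real (D_G G x)"
proof (cases "x = \<one>")
  case True
  then show ?thesis using one_Lambda by simp
next
  case False
  have "(\<Sum>k<K. indicator (Lambda G k) x - indicator {\<one>} x :: real)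
      = (\<Sum>k<K. of_bool (x \<in> Lambda G k))" using False by (simp add: indicator_def of_bool_def)
  also have "\<dots> = real (card ({..<K} \<inter> {k. x \<in> Lambda G k}))" by simp
  also have "\<dots> \<le> real (card {..<D_G G x})"
  proof -
    have "{..<K} \<inter> {k. x \<in> Lambda G k} \<subseteq> {..<D_G G x}"
      using D_ge[OF rf x False] by auto
    then show ?thesis by (intro of_nat_mono card_mono) auto
  qed
  finally show ?thesis by simp
qed

lemma exp_lower:
  assumes rf: "residually_finite G"
  shows "(\<Sum>k<K. measure (lw n) (Lambda G k) - pmf (lw n) \<one>)
     \<le> measure_pmf.expectation (lw n) (\<lambda>x. real (D_G G x))"
proof -
  have int: "integrable (lw n) f" for f :: "'a \<Rightarrow> real"
    by (rule integrable_measure_pmf_finite[OF finite_set_lw])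
  have "(\<Sum>k<K. measure (lw n) (Lambda G k) - pmf (lw n) \<one>)
      = measure_pmf.expectation (lw n) (\<lambda>x. \<Sum>k<K. indicator (Lambda G k) x - indicator {\<one>} x)"
    by (subst Bochner_Integration.integral_sum) (auto simp: int measure_pmf_single)
  also have "\<dots> \<le> measure_pmf.expectation (lw n) (\<lambda>x. real (D_G G x))"
    by (rule integral_mono_AE) (auto intro!: AE_pmfI D_lower[OF rf] int dest: set_lw[THEN subsetD])
  finally show ?thesis .
qed

lemma p1_lim:
  assumes gen: "generate G S = carrier G" and inf: "infinite (carrier G)"
  shows "(\<lambda>n. pmf (lw n) \<one>) \<longlonglongrightarrow> 0"
proof (rule order_tendstoI)
  fix a :: real assume "a < 0"
  then show "eventually (\<lambda>n. a < pmf (lw n) \<one>) sequentially"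
    by (auto intro: always_eventually less_le_trans[OF _ pmf_nonneg])
next
  fix a :: real assume a: "0 < a"
  obtain N :: nat where N: "2 / a < real N" using reals_Archimedean2 by blast
  have Npos: "real N > 0" using N a by (smt (verit) divide_pos_pos)
  obtain F where F: "F \<subseteq> carrier G" "finite F" "card F = N"
    using infinite_arbitrarily_large[OF inf] by blast
  have "\<forall>g\<in>F. eventually (\<lambda>n. pmf (lw n) \<one> - pmf (lw n) g < a / 2) sequentially"
  proof
    fix g assume "g \<in> F"
    then have g: "g \<in> carrier G" using F by auto
    have "(\<lambda>n. pmf (lw n) \<one> - pmf (lw n) (\<one> \<otimes> g)) \<longlonglongrightarrow> 0"
      by (rule pmf_diff[OF gen one_closed g])
    then have "(\<lambda>n. pmf (lw n) \<one> - pmf (lw n) g) \<longlonglongrightarrow> 0" using g by simp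
    then show "eventually (\<lambda>n. pmf (lw n) \<one> - pmf (lw n) g < a / 2) sequentially"
      using a by (intro order_tendstoD) auto
  qed
  then have ev: "eventually (\<lambda>n. \<forall>g\<in>F. pmf (lw n) \<one> - pmf (lw n) g < a / 2) sequentially"
    using F(2) by (simp add: eventually_ball_finite)
  show "eventually (\<lambda>n. pmf (lw n) \<one> < a) sequentially"
    using ev
  proof eventually_elim
    case (elim n)
    have "real N * pmf (lw n) \<one> = (\<Sum>g\<in>F. pmf (lw n) \<one>)" using F by simp
    also have "\<dots> \<le> (\<Sum>g\<in>F. pmf (lw n) g + a / 2)"
      using elim by (intro sum_mono) (auto simp: less_imp_le)
    also have "\<dots> = measure (lw n) F + real N * (a / 2)"
      using F by (simp add: sum.distrib measure_measure_pmf_finite)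
    also have "\<dots> \<le> 1 + real N * (a / 2)" by simp
    finally have "real N * pmf (lw n) \<one> \<le> 1 + real N * (a / 2)" .
    then have "pmf (lw n) \<one> \<le> 1 / real N + a / 2" using Npos by (simp add: field_simps)
    moreover have "1 / real N < a / 2" using N a Npos by (simp add: field_simps)
    ultimately show ?case by linarith
  qed
qed

lemma Lam_ev:
  assumes gen: "generate G S = carrier G" and d: "\<delta> > 0"
  shows "eventually (\<lambda>n. 1 / real (grp_index G (Lambda G k)) - \<delta> < measure (lw n) (Lambda G k)) sequentially"
proof (cases "grp_index G (Lambda G k) = 0")
  case True
  have "- \<delta> < measure (lw n) (Lambda G k)" for n
    using d measure_nonneg[of "measure_pmf (lw n)" "Lambda G k"] by linarith
  then show ?thesis using True by (simp add: always_eventually)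
next
  case False
  then have fin: "finite (rcosets (Lambda G k))" by (auto simp: grp_index_def intro: card_ge_0_finite)
  have "(\<lambda>n. measure (lw n) (Lambda G k)) \<longlonglongrightarrow> 1 / real (grp_index G (Lambda G k))"
    unfolding grp_index_def by (rule coset_lim[OF gen Lambda_subgroup fin])
  then show ?thesis using d by (intro order_tendstoD) auto
qed

end


theorem proposition4p1:
  fixes G :: "('a, 'b) monoid_scheme" and S :: "'a set"
  assumes "group G"
    and "infinite (carrier G)"
    and "finitely_generated G"
    and "residually_finite G"
    and "finite S" and "S \<subseteq> carrier G"
    and "\<forall>s \<in> S. inv\<^bsub>G\<^esub> s \<in> S"
    and "generate G S = carrier G"
  shows "liminf (\<lambda>n. ereal (measure_pmf.expectation (lazy_walk G S n)
                                  (\<lambda>x. real (D_G G x))))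
         \<ge> 2 + suminf (\<lambda>k. ereal (1 / real (grp_index G (Lambda G (k + 2)))))"
proof -
  note grp = assms(1) and inf = assms(2) and rf = assms(4) and gen = assms(8)
  have Sne: "S \<noteq> {}"
  proof
    assume S0: "S = {}"
    have "x = \<one>\<^bsub>G\<^esub>" if "x \<in> generate G {}" for x
      using that by (induction rule: generate.induct) (auto simp: group.is_monoid[OF grp])
    then have "carrier G \<subseteq> {\<one>\<^bsub>G\<^esub>}" using gen S0 by auto
    then show False using inf finite_subset by blast
  qed
  interpret lwalk G S
    by (rule lwalk.intro[OF grp], unfold_locales) (use assms Sne in auto)
  define a where "a n = measure_pmf.expectation (lw n) (\<lambda>x. real (D_G G x))" for n
  define c where "c k = 1 / real (grp_index G (Lambda G k))" for k
  have c01: "c 0 = 1" "c 1 = 1" by (simp_all add: c_def Lambda_small idx_carrier)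
  have cnn: "c k \<ge> 0" for k by (simp add: c_def)
  have key: "ereal (\<Sum>k<K. c k) \<le> liminf (\<lambda>n. ereal (a n))" for K
  proof (unfold le_Liminf_iff, intro allI impI)
    fix y assume y: "y < ereal (\<Sum>k<K. c k)"
    show "eventually (\<lambda>n. y < ereal (a n)) sequentially"
    proof (cases y)
      case MInf then show ?thesis by simp
    next
      case PInf then show ?thesis using y by simp
    next
      case (real r)
      define T where "T = (\<Sum>k<K. c k)"
      define \<epsilon> where "\<epsilon> = (T - r) / (2 * (real K + 1))"
      have Tr: "r < T" using y real by (simp add: T_def)
      have e: "\<epsilon> > 0" using Tr by (simp add: \<epsilon>_def)
      have ev1: "eventually (\<lambda>n. \<forall>k\<in>{..<K}. c k - \<epsilon> < measure (lw n) (Lambda G k)) sequentially"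
        using Lam_ev[OF gen e] by (simp add: eventually_ball_finite c_def)
      have ev2: "eventually (\<lambda>n. pmf (lw n) \<one>\<^bsub>G\<^esub> < \<epsilon>) sequentially"
        using p1_lim[OF gen inf] e by (intro order_tendstoD) auto
      show ?thesis using ev1 ev2
      proof eventually_elim
        case (elim n)
        have "T - 2 * real K * \<epsilon> = (\<Sum>k<K. c k - 2 * \<epsilon>)" by (simp add: T_def sum_subtractf)
        also have "\<dots> \<le> (\<Sum>k<K. measure (lw n) (Lambda G k) - pmf (lw n) \<one>\<^bsub>G\<^esub>)"
          using elim by (intro sum_mono) force
        also have "\<dots> \<le> a n" unfolding a_def by (rule exp_lower[OF rf])
        finally have "T - 2 * real K * \<epsilon> \<le> a n" .
        moreover have "2 * real K * \<epsilon> < T - r"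
          using Tr by (simp add: \<epsilon>_def field_simps)
        ultimately show ?case using real by simp
      qed
    qed
  qed
  have shift: "(\<Sum>k<K + 2. c k) = 2 + (\<Sum>k<K. c (k + 2))" for K
  proof -
    have c1': "c (Suc 0) = 1" using c01(2) by simp
    show ?thesis by (induction K) (simp_all add: numeral_2_eq_2 c01(1) c1')
  qed
  have "2 + suminf (\<lambda>k. ereal (c (k + 2))) = 2 + (SUP K. \<Sum>k<K. ereal (c (k + 2)))"
    by (subst suminf_ereal_eq_SUP) (auto simp: cnn)
  also have "\<dots> = (SUP K. 2 + (\<Sum>k<K. ereal (c (k + 2))))"
    by (rule SUP_ereal_add_right[symmetric]) auto
  also have "\<dots> \<le> liminf (\<lambda>n. ereal (a n))"
  proof (rule SUP_least)
    fix K :: nat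
    have "2 + (\<Sum>k<K. ereal (c (k + 2))) = ereal (2 + (\<Sum>k<K. c (k + 2)))" by simp
    also have "\<dots> = ereal (\<Sum>k<K + 2. c k)" by (simp only: shift)
    also have "\<dots> \<le> liminf (\<lambda>n. ereal (a n))" by (rule key)
    finally show "2 + (\<Sum>k<K. ereal (c (k + 2))) \<le> liminf (\<lambda>n. ereal (a n))" .
  qed
  finally show ?thesis by (simp add: a_def c_def)
qed


end
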